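(* Let $G$ be a connected, closed Lie subgroup of $SO_o(1,2)\ltimes\mathbb{R}^3\subset Iso(\mathbb{R}^3_1)$ which acts isometrically and with cohomogeneity one on $\mathbb{R}^3_1$. If $L(G)$ is conjugate to $SO(2)$ (i.e. to $K=\{\exp(tB_2):t\in\mathbb{R}\}$), then $G$ is conjugate within $SO_o(1,2)\ltimes\mathbb{R}^3$ to one of the following groups: (i) the standard embedding of $SO(2)\times\mathbb{R}$ in $SO_o(1,2)\ltimes\mathbb{R}^3$, namely $\{(\exp(tB_2),se_1):t,s\in\mathbb{R}\}$; (ii) the standard embedding of $Iso_o(\mathbb{R}^2)$ in $SO_o(1,2)\ltimes\mathbb{R}^3$, namely $\{(\exp(tB_2),ue_2+ve_3):t,u,v\in\mathbb{R}\}$.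
   Context: $\mathbb{R}^3_1$ is $\mathbb{R}^3$ with the scalar product $\langle x,y\rangle=-x_1y_1+x_2y_2+x_3y_3$; its isometry group is $Iso(\mathbb{R}^3_1)=O(1,2)\ltimes\mathbb{R}^3$, where $(A,a)$ acts by $x\mapsto Ax+a$; $SO_o(1,2)$ is the identity component of $O(1,2)$. $L:G\to SO_o(1,2)$, $(A,a)\mapsto A$, is the projection to the linear part. $E_{ij}$ is the $3\times3$ matrix with $1$ in entry $(i,j)$ and $0$ elsewhere, $e_1,e_2,e_3$ is the standard basis, and $B_2=E_{23}-E_{32}$. An action is of cohomogeneity one if some orbit has codimension one. *)

theory Defs
  imports "HOL-Analysis.Analysis"
begin

type_synonym mat3 = "real^3^3"
type_synonym vec3 = "real^3"
type_synonym aff = "mat3 \<times> vec3"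

definition lorentzJ :: mat3 where
  "lorentzJ = vector [vector [-1, 0, 0], vector [0, 1, 0], vector [0, 0, 1]]"

definition O12 :: "mat3 set" where
  "O12 = {A. transpose A ** lorentzJ ** A = lorentzJ}"

definition SOo12 :: "mat3 set" where
  "SOo12 = {A. A \<in> O12 \<and> det A = 1 \<and> A $ 1 $ 1 > 0}"

text \<open>Semidirect product SO_o(1,2) |x R^3; (A,a) acts by x \<mapsto> A x + a.\<close>
definition aff_mult :: "aff \<Rightarrow> aff \<Rightarrow> aff" where
  "aff_mult g h = (fst g ** fst h, fst g *v snd h + snd g)"

definition aff_inv :: "aff \<Rightarrow> aff" where
  "aff_inv g = (matrix_inv (fst g), - (matrix_inv (fst g) *v snd g))"

definition aff_one :: aff where
  "aff_one = (mat 1, 0)"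

definition SOo12_semidirect :: "aff set" where
  "SOo12_semidirect = SOo12 \<times> UNIV"

definition is_subgroup :: "aff set \<Rightarrow> bool" where
  "is_subgroup G \<longleftrightarrow> G \<subseteq> SOo12_semidirect \<and> aff_one \<in> G \<and>
     (\<forall>g\<in>G. \<forall>h\<in>G. aff_mult g h \<in> G) \<and> (\<forall>g\<in>G. aff_inv g \<in> G)"

definition Lpart :: "aff set \<Rightarrow> mat3 set" where
  "Lpart G = fst ` G"

text \<open>exp(t B_2) with B_2 = E_23 - E_32, written out explicitly.\<close>
definition expB2 :: "real \<Rightarrow> mat3" where
  "expB2 t = vector [vector [1, 0, 0], vector [0, cos t, sin t], vector [0, - sin t, cos t]]"

definition K :: "mat3 set" where
  "K = range expB2"

definition e1 :: vec3 where "e1 = vector [1, 0, 0]"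
definition e2 :: vec3 where "e2 = vector [0, 1, 0]"
definition e3 :: vec3 where "e3 = vector [0, 0, 1]"

text \<open>Tangent space at x of the orbit G x: the image of the Lie algebra of G
  (velocities at 0 of differentiable curves in G through the identity) under
  the differential of g \<mapsto> g x.\<close>
definition orbit_tangent :: "aff set \<Rightarrow> vec3 \<Rightarrow> vec3 set" where
  "orbit_tangent G x = {fst v *v x + snd v | v. \<exists>c. (\<forall>t. c t \<in> G) \<and> c 0 = aff_one \<and>
       (c has_vector_derivative v) (at 0)}"

text \<open>Cohomogeneity one: some orbit has codimension one in R^3, i.e. dimension 2.\<close>
definition cohomogeneity_one :: "aff set \<Rightarrow> bool" where
  "cohomogeneity_one G \<longleftrightarrow> (\<exists>x. dim (orbit_tangent G x) = 2)"

definition conj_aff :: "aff \<Rightarrow> aff set \<Rightarrow> aff set" where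
  "conj_aff g H = (\<lambda>h. aff_mult (aff_mult g h) (aff_inv g)) ` H"

definition SO2_times_R :: "aff set" where
  "SO2_times_R = {(expB2 t, s *\<^sub>R e1) | t s. True}"

definition Iso_R2 :: "aff set" where
  "Iso_R2 = {(expB2 t, u *\<^sub>R e2 + v *\<^sub>R e3) | t u v. True}"

end

theory Submission
  imports Defs
begin


definition B2m :: mat3 where "B2m = vector [vector [0,0,0], vector [0,0,1], vector [0,-1,0]]"
definition D1 :: mat3 where "D1 = vector [vector [1,0,0], vector [0,0,0], vector [0,0,0]]"
definition D2 :: mat3 where "D2 = vector [vector [0,0,0], vector [0,1,0], vector [0,0,1]]"

lemma expB2_nth [simp]:
  "expB2 t $ 1 $ 1 = 1" "expB2 t $ 1 $ 2 = 0" "expB2 t $ 1 $ 3 = 0"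
  "expB2 t $ 2 $ 1 = 0" "expB2 t $ 2 $ 2 = cos t" "expB2 t $ 2 $ 3 = sin t"
  "expB2 t $ 3 $ 1 = 0" "expB2 t $ 3 $ 2 = - sin t" "expB2 t $ 3 $ 3 = cos t"
  by (simp_all add: expB2_def)

lemma B2m_nth [simp]:
  "B2m $ 1 $ 1 = 0" "B2m $ 1 $ 2 = 0" "B2m $ 1 $ 3 = 0"
  "B2m $ 2 $ 1 = 0" "B2m $ 2 $ 2 = 0" "B2m $ 2 $ 3 = 1"
  "B2m $ 3 $ 1 = 0" "B2m $ 3 $ 2 = - 1" "B2m $ 3 $ 3 = 0"
  by (simp_all add: B2m_def)

lemma e_nth [simp]:
  "e1 $ 1 = 1" "e1 $ 2 = 0" "e1 $ 3 = 0"
  "e2 $ 1 = 0" "e2 $ 2 = 1" "e2 $ 3 = 0"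
  "e3 $ 1 = 0" "e3 $ 2 = 0" "e3 $ 3 = 1"
  by (simp_all add: e1_def e2_def e3_def)

lemma mat1_nth [simp]:
  "(mat 1 :: mat3) $ 1 $ 1 = 1" "(mat 1 :: mat3) $ 1 $ 2 = 0" "(mat 1 :: mat3) $ 1 $ 3 = 0"
  "(mat 1 :: mat3) $ 2 $ 1 = 0" "(mat 1 :: mat3) $ 2 $ 2 = 1" "(mat 1 :: mat3) $ 2 $ 3 = 0"
  "(mat 1 :: mat3) $ 3 $ 1 = 0" "(mat 1 :: mat3) $ 3 $ 2 = 0" "(mat 1 :: mat3) $ 3 $ 3 = 1"
  by (simp_all add: mat_def)

lemma mat3_eq: "(A::mat3) = B \<longleftrightarrow> (\<forall>i j. A $ i $ j = B $ i $ j)"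
  by (simp add: vec_eq_iff)

lemma mat3_eq': "(A::mat3) = B \<longleftrightarrow>
  A$1$1 = B$1$1 \<and> A$1$2 = B$1$2 \<and> A$1$3 = B$1$3 \<and>
  A$2$1 = B$2$1 \<and> A$2$2 = B$2$2 \<and> A$2$3 = B$2$3 \<and>
  A$3$1 = B$3$1 \<and> A$3$2 = B$3$2 \<and> A$3$3 = B$3$3"
  by (simp add: vec_eq_iff forall_3)

lemma vec3_eq': "(a::vec3) = b \<longleftrightarrow> a$1 = b$1 \<and> a$2 = b$2 \<and> a$3 = b$3"
  by (simp add: vec_eq_iff forall_3)

lemma mm_nth: "((A::mat3) ** B) $ i $ j = A$i$1 * B$1$j + A$i$2 * B$2$j + A$i$3 * B$3$j"
  by (simp add: matrix_matrix_mult_def sum_3)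

lemma mv_nth: "((A::mat3) *v x) $ i = A$i$1 * x$1 + A$i$2 * x$2 + A$i$3 * x$3"
  by (simp add: matrix_vector_mult_def sum_3)

lemma expB2_add: "expB2 s ** expB2 t = expB2 (s + t)"
  by (simp add: mat3_eq' mm_nth cos_add sin_add)

lemma expB2_0: "expB2 0 = mat 1"
  by (simp add: mat3_eq')

lemma expB2_decomp: "expB2 t = D1 + cos t *\<^sub>R D2 + sin t *\<^sub>R B2m"
  by (simp add: mat3_eq' D1_def D2_def)

lemma hvd_scaleR_const: "(f has_real_derivative d) F \<Longrightarrow> ((\<lambda>x. f x *\<^sub>R c) has_vector_derivative (d *\<^sub>R c)) F"
  using bounded_linear.has_vector_derivative[OF bounded_linear_scaleR_left, of f d F c]
  by (simp add: has_real_derivative_iff_has_vector_derivative)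

lemma expB2_deriv: "((\<lambda>t. expB2 (a * t)) has_vector_derivative (a *\<^sub>R B2m)) (at 0)"
proof -
  have c: "((\<lambda>t. cos (a*t)) has_real_derivative 0) (at 0)"
    by (auto intro!: derivative_eq_intros)
  have s: "((\<lambda>t. sin (a*t)) has_real_derivative a) (at 0)"
    by (auto intro!: derivative_eq_intros)
  have "((\<lambda>t. D1 + cos (a*t) *\<^sub>R D2 + sin (a*t) *\<^sub>R B2m) has_vector_derivative
      (0 + 0 *\<^sub>R D2 + a *\<^sub>R B2m)) (at 0)"
    by (intro derivative_intros hvd_scaleR_const c s)
  then show ?thesis by (simp add: expB2_decomp)
qed

lemma inv_props:
  assumes "invertible (A::mat3)"
  shows "A ** matrix_inv A = mat 1" "matrix_inv A ** A = mat 1"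
proof -
  have "\<exists>A'. A ** A' = mat 1 \<and> A' ** A = mat 1" using assms unfolding invertible_def by blast
  then have "A ** matrix_inv A = mat 1 \<and> matrix_inv A ** A = mat 1"
    unfolding matrix_inv_def by (rule someI_ex)
  then show "A ** matrix_inv A = mat 1" "matrix_inv A ** A = mat 1" by auto
qed

lemma matrix_inv_unique:
  assumes "(A::mat3) ** B = mat 1" "B ** A = mat 1"
  shows "matrix_inv A = B"
proof -
  have inv: "invertible A" using assms unfolding invertible_def by blast
  have "matrix_inv A = matrix_inv A ** (A ** B)" using assms by simp
  also have "\<dots> = (matrix_inv A ** A) ** B" by (simp add: matrix_mul_assoc)
  also have "\<dots> = B" using inv_props[OF inv] by simp
  finally show ?thesis .
qed

lemma invertible_inv: "invertible (A::mat3) \<Longrightarrow> invertible (matrix_inv A)"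
  using inv_props unfolding invertible_def by blast

lemma inv_inv: "invertible (A::mat3) \<Longrightarrow> matrix_inv (matrix_inv A) = A"
  using inv_props by (intro matrix_inv_unique) auto

lemma assoc4: "((A::mat3) ** B) ** (C ** D) = A ** ((B ** C) ** D)"
  by (simp add: matrix_mul_assoc)

lemma inv_mult_aux:
  assumes a: "invertible (A::mat3)" "invertible (B::mat3)"
  shows "(A ** B) ** (matrix_inv B ** matrix_inv A) = mat 1"
        "(matrix_inv B ** matrix_inv A) ** (A ** B) = mat 1"
proof -
  show "(A ** B) ** (matrix_inv B ** matrix_inv A) = mat 1"
    unfolding assoc4 using inv_props[OF a(1)] inv_props[OF a(2)] by simp
  show "(matrix_inv B ** matrix_inv A) ** (A ** B) = mat 1"
    unfolding assoc4 using inv_props[OF a(1)] inv_props[OF a(2)] by simp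
qed

lemma invertible_mult: "invertible (A::mat3) \<Longrightarrow> invertible (B::mat3) \<Longrightarrow> invertible (A ** B)"
  unfolding invertible_def[of "A ** B"] using inv_mult_aux by blast

lemma inv_mult: "invertible (A::mat3) \<Longrightarrow> invertible (B::mat3) \<Longrightarrow>
   matrix_inv (A ** B) = matrix_inv B ** matrix_inv A"
  using inv_mult_aux by (blast intro: matrix_inv_unique)

lemma inv_mat1: "matrix_inv (mat 1 :: mat3) = mat 1"
  by (rule matrix_inv_unique) simp_all

lemma invertible_mat1: "invertible (mat 1 :: mat3)"
  unfolding invertible_def by (rule exI[of _ "mat 1"]) simp

lemma expB2_inv: "matrix_inv (expB2 t) = expB2 (- t)"
  by (rule matrix_inv_unique) (simp_all add: expB2_add expB2_0)

lemma invertible_expB2: "invertible (expB2 t)"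
  unfolding invertible_def by (rule exI[of _ "expB2 (-t)"]) (simp add: expB2_add expB2_0)

lemma expB2_e1coord [simp]: "(expB2 t *v a) $ 1 = a $ 1"
  by (simp add: mv_nth)

lemma expB2_per: "expB2 (t + 2 * pi) = expB2 t"
  by (simp add: mat3_eq')

lemma K_rep: assumes "k \<in> K" shows "\<exists>\<theta>. - pi \<le> \<theta> \<and> \<theta> \<le> pi \<and> k = expB2 \<theta>"
proof -
  obtain t where k: "k = expB2 t" using assms unfolding K_def by auto
  have "(cos t)\<^sup>2 + (sin t)\<^sup>2 = 1" by (rule sin_cos_squared_add2)
  from sincos_total_2pi_le[OF this] obtain u where u: "0 \<le> u" "u \<le> 2 * pi" "cos t = cos u" "sin t = sin u"
    by metis
  have ku: "k = expB2 u" unfolding k mat3_eq' expB2_nth using u(3,4) by simp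
  show ?thesis
  proof (cases "u \<le> pi")
    case True
    have "- pi \<le> u" using u(1) pi_ge_zero by linarith
    then show ?thesis using ku True by blast
  next
    case False
    have "k = expB2 ((u - 2*pi) + 2*pi)" using ku by simp
    then have e: "k = expB2 (u - 2*pi)" by (simp only: expB2_per)
    have "- pi \<le> u - 2*pi" "u - 2*pi \<le> pi" using False u(2) by linarith+
    then show ?thesis using e by blast
  qed
qed

lemma mv_neg [simp]: "(A::mat3) *v (- x) = - (A *v x)"
  by (simp add: vec3_eq' mv_nth)

lemma aff_mult_simp: "aff_mult (A, a) (B, b) = (A ** B, A *v b + a)"
  by (simp add: aff_mult_def)

lemma aff_inv_simp: "aff_inv (A, a) = (matrix_inv A, - (matrix_inv A *v a))"
  by (simp add: aff_inv_def)

lemma aff_assoc: "aff_mult (aff_mult g h) k = aff_mult g (aff_mult h k)"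
  by (cases g, cases h, cases k) (simp add: aff_mult_def matrix_mul_assoc matrix_vector_mul_assoc algebra_simps)

lemma aff_one_l [simp]: "aff_mult aff_one g = g"
  by (cases g) (simp add: aff_mult_def aff_one_def)

lemma aff_one_r [simp]: "aff_mult g aff_one = g"
  by (cases g) (simp add: aff_mult_def aff_one_def)

lemma aff_inv_r: "invertible (fst g) \<Longrightarrow> aff_mult g (aff_inv g) = aff_one"
  by (cases g) (simp add: aff_mult_def aff_inv_def aff_one_def inv_props matrix_vector_mul_assoc)

lemma aff_inv_l: "invertible (fst g) \<Longrightarrow> aff_mult (aff_inv g) g = aff_one"
  by (cases g) (simp add: aff_mult_def aff_inv_def aff_one_def inv_props matrix_vector_mul_assoc)

lemma aff_inv_unique: "invertible (fst g) \<Longrightarrow> aff_mult h g = aff_one \<Longrightarrow> h = aff_inv g"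
  by (metis aff_assoc aff_inv_r aff_one_l aff_one_r)

lemma aff_inv_mult: "invertible (fst g) \<Longrightarrow> invertible (fst h) \<Longrightarrow>
   aff_inv (aff_mult g h) = aff_mult (aff_inv h) (aff_inv g)"
proof -
  assume a: "invertible (fst g)" "invertible (fst h)"
  have i: "invertible (fst (aff_mult g h))" using a by (simp add: aff_mult_def invertible_mult)
  have "aff_mult (aff_mult (aff_inv h) (aff_inv g)) (aff_mult g h) = aff_one"
    by (metis a aff_assoc aff_inv_l aff_one_l)
  then show ?thesis using aff_inv_unique[OF i] by metis
qed

lemma inv_fst_aff_inv: "invertible (fst g) \<Longrightarrow> invertible (fst (aff_inv g))"
  by (simp add: aff_inv_def invertible_inv)

lemma aff_inv_inv: "invertible (fst g) \<Longrightarrow> aff_inv (aff_inv g) = g"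
proof -
  assume a: "invertible (fst g)"
  have "aff_mult g (aff_inv g) = aff_one" by (rule aff_inv_r[OF a])
  from aff_inv_unique[OF inv_fst_aff_inv[OF a] this] show ?thesis by simp
qed

definition cj :: "aff \<Rightarrow> aff \<Rightarrow> aff" where
  "cj g h = aff_mult (aff_mult g h) (aff_inv g)"

lemma conj_aff_cj: "conj_aff g H = cj g ` H"
  by (simp add: conj_aff_def cj_def)

lemma cj_cj: "invertible (fst g) \<Longrightarrow> invertible (fst g') \<Longrightarrow> cj g (cj g' h) = cj (aff_mult g g') h"
  by (simp add: cj_def aff_inv_mult aff_assoc)

lemma cj_one: "cj aff_one h = h"
proof -
  have "aff_inv aff_one = aff_one"
    by (simp add: aff_inv_def aff_one_def inv_mat1)
  then show ?thesis by (simp add: cj_def)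
qed

lemma cj_inv_cj: "invertible (fst g) \<Longrightarrow> cj (aff_inv g) (cj g h) = h"
  by (simp add: cj_cj inv_fst_aff_inv aff_inv_l cj_one)

lemma cj_cj_inv: "invertible (fst g) \<Longrightarrow> cj g (cj (aff_inv g) h) = h"
  by (simp add: cj_cj inv_fst_aff_inv aff_inv_r cj_one)

lemma cj_mult: "invertible (fst g) \<Longrightarrow> cj g (aff_mult h k) = aff_mult (cj g h) (cj g k)"
  unfolding cj_def by (metis aff_assoc aff_inv_l aff_one_l)

lemma cj_one': "invertible (fst g) \<Longrightarrow> cj g aff_one = aff_one"
  by (simp add: cj_def aff_inv_r)

lemma cj_invertible: "invertible (fst g) \<Longrightarrow> invertible (fst h) \<Longrightarrow> invertible (fst (cj g h))"
  by (simp add: cj_def aff_mult_def aff_inv_def invertible_mult invertible_inv)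

lemma cj_inv: "invertible (fst g) \<Longrightarrow> invertible (fst h) \<Longrightarrow> cj g (aff_inv h) = aff_inv (cj g h)"
proof -
  assume a: "invertible (fst g)" "invertible (fst h)"
  have "aff_mult (cj g (aff_inv h)) (cj g h) = cj g (aff_mult (aff_inv h) h)"
    by (rule cj_mult[OF a(1), symmetric])
  also have "\<dots> = aff_one" by (simp only: aff_inv_l[OF a(2)] cj_one'[OF a(1)])
  finally have "aff_mult (cj g (aff_inv h)) (cj g h) = aff_one" .
  then show ?thesis by (rule aff_inv_unique[OF cj_invertible[OF a]])
qed

lemma cj_formula: "cj (Q, b) (A, a) = (Q ** A ** matrix_inv Q, Q *v a + b - (Q ** A ** matrix_inv Q) *v b)"
  by (simp add: cj_def aff_mult_def aff_inv_def matrix_vector_mul_assoc)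



definition grp :: "aff set \<Rightarrow> bool" where
  "grp G \<longleftrightarrow> aff_one \<in> G \<and> (\<forall>g\<in>G. \<forall>h\<in>G. aff_mult g h \<in> G) \<and> (\<forall>g\<in>G. aff_inv g \<in> G)"

lemma grp_conj:
  assumes "grp G" "\<forall>h\<in>G. invertible (fst h)" "invertible (fst g)"
  shows "grp (cj g ` G)"
  unfolding grp_def
proof (intro conjI ballI)
  show "aff_one \<in> cj g ` G" using assms cj_one'[OF assms(3)] unfolding grp_def by (metis image_eqI)
next
  fix x y assume "x \<in> cj g ` G" "y \<in> cj g ` G"
  then obtain h k where "h \<in> G" "k \<in> G" "x = cj g h" "y = cj g k" by auto
  then show "aff_mult x y \<in> cj g ` G" using assms cj_mult[OF assms(3)] unfolding grp_def
    by (metis image_eqI)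
next
  fix x assume "x \<in> cj g ` G"
  then obtain h where "h \<in> G" "x = cj g h" by auto
  then show "aff_inv x \<in> cj g ` G" using assms cj_inv[OF assms(3)] unfolding grp_def
    by (metis image_eqI)
qed

definition cjlin :: "mat3 \<Rightarrow> vec3 \<Rightarrow> aff \<Rightarrow> aff" where
  "cjlin Q b h = (Q ** fst h ** matrix_inv Q, Q *v snd h - (Q ** fst h ** matrix_inv Q) *v b)"

lemma cj_lin: "cj (Q, b) h = cjlin Q b h + (0, b)"
  by (cases h) (simp add: cj_formula cjlin_def)

lemma linear_cjlin: "linear (cjlin Q b)"
proof (rule linearI)
  fix x y :: aff and c :: real
  show "cjlin Q b (x + y) = cjlin Q b x + cjlin Q b y"
    by (simp add: cjlin_def prod_eq_iff mat3_eq' vec3_eq' mm_nth mv_nth algebra_simps)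
  show "cjlin Q b (c *\<^sub>R x) = c *\<^sub>R cjlin Q b x"
    by (simp add: cjlin_def prod_eq_iff mat3_eq' vec3_eq' mm_nth mv_nth algebra_simps)
qed

lemma bl_cjlin: "bounded_linear (cjlin Q b)"
  using linear_cjlin linear_conv_bounded_linear by blast

lemma cont_cj: "continuous_on S (cj (Q, b))"
proof -
  have "continuous_on S (\<lambda>h. cjlin Q b h + (0, b))"
    by (intro continuous_intros linear_continuous_on bl_cjlin)
  then show ?thesis by (simp add: cj_lin[abs_def])
qed

lemma cont_cj_at: "continuous (at x) (cj g)"
proof -
  have "continuous_on UNIV (cj g)" using cont_cj[of UNIV "fst g" "snd g"] by simp
  then show ?thesis by (metis UNIV_I continuous_on_eq_continuous_at open_UNIV)
qed

lemma cj_image_vimage: "invertible (fst g) \<Longrightarrow> cj g ` G = cj (aff_inv g) -` G"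
proof
  assume a: "invertible (fst g)"
  show "cj g ` G \<subseteq> cj (aff_inv g) -` G" using cj_inv_cj[OF a] by auto
  show "cj (aff_inv g) -` G \<subseteq> cj g ` G"
  proof
    fix x assume "x \<in> cj (aff_inv g) -` G"
    then have "cj (aff_inv g) x \<in> G" by simp
    moreover have "x = cj g (cj (aff_inv g) x)" using cj_cj_inv[OF a] by simp
    ultimately show "x \<in> cj g ` G" by blast
  qed
qed

lemma closed_cj: "invertible (fst g) \<Longrightarrow> closed G \<Longrightarrow> closed (cj g ` G)"
  by (simp add: cj_image_vimage continuous_closed_vimage cont_cj_at)

lemma connected_cj: "connected G \<Longrightarrow> connected (cj g ` G)"
  using cont_cj[of G "fst g" "snd g"] connected_continuous_image by simp

lemma cj_image_inv: "invertible (fst g) \<Longrightarrow> cj (aff_inv g) ` (cj g ` G) = G"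
  by (simp add: image_image cj_inv_cj)

lemma ot_fwd:
  assumes Q: "invertible Q" and y: "y \<in> orbit_tangent G x"
  shows "Q *v y \<in> orbit_tangent (cj (Q, b) ` G) (Q *v x + b)"
proof -
  obtain v c where yv: "y = fst v *v x + snd v" and c: "\<forall>t. c t \<in> G" "c 0 = aff_one"
    "(c has_vector_derivative v) (at 0)"
    using y unfolding orbit_tangent_def by blast
  define c' where "c' t = cj (Q, b) (c t)" for t
  have "((\<lambda>t. cjlin Q b (c t) + (0, b)) has_vector_derivative cjlin Q b v) (at 0)"
    using bounded_linear.has_vector_derivative[OF bl_cjlin c(3)]
    by (simp add: has_vector_derivative_add_const)
  moreover have "c' = (\<lambda>t. cjlin Q b (c t) + (0, b))"
    by (simp add: fun_eq_iff c'_def cj_lin)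
  ultimately have d: "(c' has_vector_derivative cjlin Q b v) (at 0)"
    by simp
  have c'G: "\<forall>t. c' t \<in> cj (Q, b) ` G" using c(1) by (simp add: c'_def)
  have c'0: "c' 0 = aff_one" using c(2) cj_one'[of "(Q,b)"] Q by (simp add: c'_def)
  have eq: "fst (cjlin Q b v) *v (Q *v x + b) + snd (cjlin Q b v) = Q *v y"
  proof -
    have "(Q ** fst v ** matrix_inv Q) *v (Q *v x) = Q *v (fst v *v x)"
      by (simp add: matrix_vector_mul_assoc matrix_mul_assoc[symmetric] inv_props[OF Q])
    then show ?thesis
      by (simp add: cjlin_def yv matrix_vector_right_distrib algebra_simps)
  qed
  have ex: "\<exists>c. (\<forall>t. c t \<in> cj (Q,b) ` G) \<and> c 0 = aff_one \<and> (c has_vector_derivative cjlin Q b v) (at 0)"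
    using d c'G c'0 by blast
  show ?thesis unfolding orbit_tangent_def mem_Collect_eq
    by (rule exI[of _ "cjlin Q b v"]) (use eq ex in auto)
qed

lemma ot_eq:
  assumes Q: "invertible Q"
  shows "orbit_tangent (cj (Q, b) ` G) (Q *v x + b) = (\<lambda>y. Q *v y) ` orbit_tangent G x"
proof
  show "(\<lambda>y. Q *v y) ` orbit_tangent G x \<subseteq> orbit_tangent (cj (Q, b) ` G) (Q *v x + b)"
    using ot_fwd[OF Q] by blast
  show "orbit_tangent (cj (Q, b) ` G) (Q *v x + b) \<subseteq> (\<lambda>y. Q *v y) ` orbit_tangent G x"
  proof
    fix z assume z: "z \<in> orbit_tangent (cj (Q, b) ` G) (Q *v x + b)"
    have Qi: "invertible (matrix_inv Q)" by (rule invertible_inv[OF Q])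
    have "matrix_inv Q *v z \<in> orbit_tangent (cj (matrix_inv Q, - (matrix_inv Q *v b)) ` (cj (Q, b) ` G))
          (matrix_inv Q *v (Q *v x + b) + - (matrix_inv Q *v b))"
      by (rule ot_fwd[OF Qi z])
    moreover have "(matrix_inv Q, - (matrix_inv Q *v b)) = aff_inv (Q, b)" by (simp add: aff_inv_def)
    moreover have "matrix_inv Q *v (Q *v x + b) + - (matrix_inv Q *v b) = x"
      by (simp add: matrix_vector_right_distrib matrix_vector_mul_assoc inv_props[OF Q])
    ultimately have "matrix_inv Q *v z \<in> orbit_tangent G x"
      using cj_image_inv[of "(Q,b)" G] Q by simp
    moreover have "z = Q *v (matrix_inv Q *v z)"
      by (simp add: matrix_vector_mul_assoc inv_props[OF Q])
    ultimately show "z \<in> (\<lambda>y. Q *v y) ` orbit_tangent G x" by blast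
  qed
qed

lemma dim_ot_eq:
  assumes Q: "invertible Q"
  shows "dim (orbit_tangent (cj (Q, b) ` G) (Q *v x + b)) = dim (orbit_tangent G x)"
proof -
  have "dim ((\<lambda>y. Q *v y) ` orbit_tangent G x) = dim (orbit_tangent G x)"
    by (rule dim_image_eq) (auto intro: matrix_vector_mul_linear inj_matrix_vector_mult[OF Q] inj_on_subset)
  then show ?thesis using ot_eq[OF Q] by simp
qed

lemma coh_cj:
  assumes Q: "invertible Q" and "cohomogeneity_one G"
  shows "cohomogeneity_one (cj (Q, b) ` G)"
  using assms dim_ot_eq[OF Q] unfolding cohomogeneity_one_def by metis



lemma subgrp_int_mult:
  fixes H :: "complex set"
  assumes H0: "0 \<in> H" and Hs: "\<forall>a\<in>H. \<forall>b\<in>H. a - b \<in> H" and a: "a \<in> H"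
  shows "of_int n * a \<in> H"
proof -
  have neg: "- x \<in> H" if "x \<in> H" for x using Hs H0 that by (metis diff_0)
  have add: "x + y \<in> H" if "x \<in> H" "y \<in> H" for x y using Hs neg that by (metis diff_minus_eq_add)
  have nat: "of_nat m * a \<in> H" for m
  proof (induction m)
    case 0 then show ?case using H0 by simp
  next
    case (Suc m) then show ?case using add[OF Suc a] by (simp add: algebra_simps)
  qed
  show ?thesis
  proof (cases "n \<ge> 0")
    case True then show ?thesis using nat[of "nat n"] by simp
  next
    case False
    then have "of_int n * a = - (of_nat (nat (- n)) * a)" by simp
    then show ?thesis using neg[OF nat] by simp
  qed
qed

lemma line_lemma:
  fixes H :: "complex set"
  assumes cl: "closed H" and H0: "0 \<in> H" and Hs: "\<forall>a\<in>H. \<forall>b\<in>H. a - b \<in> H"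
    and nd: "\<forall>e>0. \<exists>z\<in>H. z \<noteq> 0 \<and> cmod z < e"
  shows "\<exists>u. u \<noteq> 0 \<and> (\<forall>t::real. of_real t * u \<in> H)"
proof -
  have "\<forall>n::nat. \<exists>z. z \<in> H \<and> z \<noteq> 0 \<and> cmod z < 1 / (real n + 1)"
    using nd by (metis of_nat_0_le_iff zero_less_divide_1_iff add_nonneg_pos zero_less_one)
  then obtain z where z: "\<And>n. z n \<in> H" "\<And>n. z n \<noteq> 0" "\<And>n. cmod (z n) < 1 / (real n + 1)"
    by metis
  define w where "w n = z n / of_real (cmod (z n))" for n
  have wS: "\<forall>n. w n \<in> sphere 0 1" using z(2) by (simp add: w_def norm_divide)
  obtain l r where l: "l \<in> sphere 0 1" "strict_mono (r :: nat \<Rightarrow> nat)" "(w \<circ> r) \<longlonglongrightarrow> l"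
    using seq_compactE[OF compact_imp_seq_compact[OF compact_sphere] wS] by metis
  define d where "d n = cmod (z (r n))" for n
  have dpos: "d n > 0" for n using z(2) by (simp add: d_def)
  have d0: "d \<longlonglongrightarrow> 0"
  proof -
    have "(\<lambda>n. inverse (real (Suc n))) \<longlonglongrightarrow> 0" by (rule LIMSEQ_inverse_real_of_nat)
    then have "(\<lambda>n. 1 / (real n + 1)) \<longlonglongrightarrow> 0" by (simp add: inverse_eq_divide add.commute)
    then have "(\<lambda>n. 1 / (real (r n) + 1)) \<longlonglongrightarrow> 0"
      using LIMSEQ_subseq_LIMSEQ[OF _ l(2)] by (simp add: o_def)
    moreover have "norm (d n) \<le> 1 / (real (r n) + 1)" for n
      using z(3)[of "r n"] dpos[of n] by (simp add: d_def)
    ultimately show ?thesis using Lim_null_comparison[of d "\<lambda>n. 1 / (real (r n) + 1)"]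
      by (simp add: eventually_sequentially)
  qed
  show ?thesis
  proof (intro exI conjI allI)
    show "l \<noteq> 0" using l(1) by auto
    fix t :: real
    define m where "m n = \<lfloor>t / d n\<rfloor>" for n
    define p where "p n = of_int (m n) * z (r n)" for n
    have pH: "p n \<in> H" for n unfolding p_def by (rule subgrp_int_mult[OF H0 Hs z(1)])
    have md: "(\<lambda>n. of_int (m n) * d n) \<longlonglongrightarrow> t"
    proof -
      have b: "\<bar>of_int (m n) * d n - t\<bar> \<le> d n" for n
      proof -
        have "t / d n - 1 < of_int (m n)" "of_int (m n) \<le> t / d n"
          unfolding m_def by linarith+
        then have "t - d n < of_int (m n) * d n" "of_int (m n) * d n \<le> t"
          using dpos[of n] by (simp_all add: field_simps)
        then show ?thesis by linarith
      qed
      have "(\<lambda>n. of_int (m n) * d n - t) \<longlonglongrightarrow> 0"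
        using Lim_null_comparison[of "\<lambda>n. of_int (m n) * d n - t" d] b d0
        by (simp add: eventually_sequentially)
      then show ?thesis by (simp add: LIM_zero_iff)
    qed
    have "p = (\<lambda>n. of_real (of_int (m n) * d n) * (w \<circ> r) n)"
    proof
      fix n show "p n = of_real (of_int (m n) * d n) * (w \<circ> r) n"
        using dpos[of n] by (simp add: p_def w_def d_def)
    qed
    moreover have "(\<lambda>n. of_real (of_int (m n) * d n) * (w \<circ> r) n) \<longlonglongrightarrow> of_real t * l"
      by (intro tendsto_intros md l(3))
    ultimately have "p \<longlonglongrightarrow> of_real t * l" by (simp only:)
    then show "of_real t * l \<in> H" using closed_sequentially[of H p] cl pH by blast
  qed
qed



lemma small_angle:
  assumes "\<bar>\<theta>\<bar> \<le> pi" "0 \<le> \<eta>" "\<eta> \<le> pi" "cos \<theta> > cos \<eta>"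
  shows "\<bar>\<theta>\<bar> < \<eta>"
proof -
  have "cos \<eta> < cos \<bar>\<theta>\<bar>" using assms(4) by simp
  then show ?thesis using cos_mono_less_eq[of \<eta> "\<bar>\<theta>\<bar>"] assms by simp
qed

lemma cos_lt1: "0 < \<eta> \<Longrightarrow> \<eta> \<le> pi \<Longrightarrow> cos \<eta> < 1"
  using cos_mono_less_eq[of \<eta> 0] by simp

lemma entry_le_norm: "\<bar>(A::mat3) $ i $ j\<bar> \<le> norm A"
  using component_le_norm_cart[of "A $ i" j] Finite_Cartesian_Product.norm_nth_le[of A i] by linarith

lemma lemD:
  assumes grp: "grp G" and conn: "connected G" and LK: "fst ` G \<subseteq> K"
    and strip: "\<forall>g\<in>G. (fst g, (snd g $ 1) *\<^sub>R e1) \<in> G"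
    and eps: "\<epsilon> > 0"
    and disc: "\<forall>\<theta> s. (expB2 \<theta>, s *\<^sub>R e1) \<in> G \<and> \<bar>\<theta>\<bar> < \<epsilon> \<and> \<bar>s\<bar> < \<epsilon> \<longrightarrow> \<theta> = 0 \<and> s = 0"
  shows "\<forall>g\<in>G. fst g = mat 1"
proof -
  define \<eta> where "\<eta> = min (\<epsilon>/2) (pi/2)"
  have eta: "0 < \<eta>" "\<eta> \<le> pi" "\<eta> < \<epsilon>" using eps pi_gt_zero unfolding \<eta>_def by (auto simp: min_def)
  define \<delta> where "\<delta> = min \<eta> (1 - cos \<eta>)"
  have dpos: "0 < \<delta>" using eta cos_lt1[of \<eta>] unfolding \<delta>_def by auto
  define U where "U = {h::aff. norm (fst h - mat 1) < \<delta> \<and> \<bar>snd h $ 1\<bar> < \<delta>}"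
  define N where "N = {h::aff. fst h = mat 1 \<and> snd h $ 1 = 0}"
  have oU: "open U" unfolding U_def
    by (intro open_Collect_conj open_Collect_less continuous_intros)
  have cN: "closed N" unfolding N_def
    by (intro closed_Collect_conj closed_Collect_eq continuous_intros)
  have UN: "G \<inter> U = G \<inter> N"
  proof
    show "G \<inter> U \<subseteq> G \<inter> N"
    proof
      fix h assume h: "h \<in> G \<inter> U"
      then have "fst h \<in> K" using LK by auto
      then obtain \<theta> where th: "- pi \<le> \<theta>" "\<theta> \<le> pi" "fst h = expB2 \<theta>" using K_rep by blast
      have "\<bar>(fst h - mat 1) $ 2 $ 2\<bar> < \<delta>" using h entry_le_norm[of "fst h - mat 1" 2 2]
        unfolding U_def by auto
      then have "\<bar>cos \<theta> - 1\<bar> < \<delta>" using th by simp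
      then have "cos \<theta> > cos \<eta>" unfolding \<delta>_def by linarith
      then have tsmall: "\<bar>\<theta>\<bar> < \<eta>" using small_angle[of \<theta> \<eta>] th eta by auto
      have ssmall: "\<bar>snd h $ 1\<bar> < \<eta>" using h unfolding U_def \<delta>_def by auto
      have "(expB2 \<theta>, (snd h $ 1) *\<^sub>R e1) \<in> G" using strip h th by auto
      moreover have "\<bar>\<theta>\<bar> < \<epsilon>" "\<bar>snd h $ 1\<bar> < \<epsilon>" using tsmall ssmall eta by linarith+
      ultimately have "\<theta> = 0 \<and> snd h $ 1 = 0" using disc by blast
      then show "h \<in> G \<inter> N" using h th expB2_0 unfolding N_def by auto
    qed
    show "G \<inter> N \<subseteq> G \<inter> U" using dpos unfolding U_def N_def by auto
  qed
  have "openin (top_of_set G) (G \<inter> N)" using UN oU by (metis openin_open_Int)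
  moreover have "closedin (top_of_set G) (G \<inter> N)" using cN by (rule closedin_closed_Int)
  ultimately have "G \<inter> N = {} \<or> G \<inter> N = G" using conn unfolding connected_clopen by blast
  moreover have "aff_one \<in> G \<inter> N" using grp unfolding grp_def N_def aff_one_def by auto
  ultimately have "G \<inter> N = G" by blast
  then show ?thesis unfolding N_def by blast
qed



lemma expB2_e1 [simp]: "expB2 t *v (c *\<^sub>R e1) = c *\<^sub>R e1"
  by (simp add: vec3_eq' mv_nth)

lemma expB2_cancel: "expB2 t *v (expB2 (- t) *v a) = a"
  by (simp add: matrix_vector_mul_assoc expB2_add expB2_0)

lemma expB2_cancel': "expB2 (- t) *v (expB2 t *v a) = a"
  by (simp add: matrix_vector_mul_assoc expB2_add expB2_0)

lemma grp_mult: "grp G \<Longrightarrow> (expB2 s, a) \<in> G \<Longrightarrow> (expB2 t, b) \<in> G \<Longrightarrow> (expB2 (s + t), expB2 s *v b + a) \<in> G"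
  unfolding grp_def by (metis aff_mult_simp expB2_add)

lemma grp_inv: "grp G \<Longrightarrow> (expB2 s, a) \<in> G \<Longrightarrow> (expB2 (- s), - (expB2 (- s) *v a)) \<in> G"
  unfolding grp_def by (metis aff_inv_simp expB2_inv)

lemma grp_one: "grp G \<Longrightarrow> (mat 1, 0) \<in> G"
  unfolding grp_def aff_one_def by simp

lemma LK_elt: "fst ` G = K \<Longrightarrow> g \<in> G \<Longrightarrow> \<exists>\<theta>. fst g = expB2 \<theta>"
  unfolding K_def by auto

lemma LK_surj: "fst ` G = K \<Longrightarrow> \<exists>a. (expB2 \<theta>, a) \<in> G"
proof -
  assume "fst ` G = K"
  then have "expB2 \<theta> \<in> fst ` G" unfolding K_def by auto
  then show ?thesis by force
qed

lemma trans_add: "grp G \<Longrightarrow> (mat 1, v) \<in> G \<Longrightarrow> (mat 1, w) \<in> G \<Longrightarrow> (mat 1, v + w) \<in> G"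
  unfolding grp_def by (metis aff_mult_simp matrix_mul_lid matrix_vector_mul_lid add.commute)

lemma trans_neg: "grp G \<Longrightarrow> (mat 1, v) \<in> G \<Longrightarrow> (mat 1, - v) \<in> G"
  unfolding grp_def by (metis aff_inv_simp inv_mat1 matrix_vector_mul_lid)

lemma trans_left: "grp G \<Longrightarrow> (mat 1, u) \<in> G \<Longrightarrow> (k, a) \<in> G \<Longrightarrow> (k, a + u) \<in> G"
  unfolding grp_def by (metis aff_mult_simp matrix_mul_lid matrix_vector_mul_lid)

lemma trans_rot:
  assumes grp: "grp G" and LK: "fst ` G = K" and v: "(mat 1, v) \<in> G"
  shows "(mat 1, expB2 \<theta> *v v) \<in> G"
proof -
  obtain a where a: "(expB2 \<theta>, a) \<in> G" using LK_surj[OF LK] by blast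
  have 1: "(expB2 \<theta>, expB2 \<theta> *v v + a) \<in> G" using grp_mult[OF grp a, of 0 v] v expB2_0 by simp
  have 2: "(expB2 (- \<theta>), - (expB2 (- \<theta>) *v a)) \<in> G" by (rule grp_inv[OF grp a])
  have "(expB2 (\<theta> + - \<theta>), expB2 \<theta> *v (- (expB2 (- \<theta>) *v a)) + (expB2 \<theta> *v v + a)) \<in> G"
    by (rule grp_mult[OF grp 1 2])
  then show ?thesis by (simp add: expB2_0 expB2_cancel)
qed

lemma trans_nat: "grp G \<Longrightarrow> (mat 1, v) \<in> G \<Longrightarrow> (mat 1, real n *\<^sub>R v) \<in> G"
proof (induction n)
  case 0 then show ?case using grp_one by simp
next
  case (Suc n)
  then have "(mat 1, real n *\<^sub>R v + v) \<in> G" using trans_add by blast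
  then show ?case by (simp add: algebra_simps)
qed

definition prv :: "vec3 \<Rightarrow> vec3" where "prv v = v - (v $ 1) *\<^sub>R e1"

lemma prv_nth [simp]: "prv v $ 1 = 0" "prv v $ 2 = v $ 2" "prv v $ 3 = v $ 3"
  by (simp_all add: prv_def)

lemma trans_scal:
  assumes grp: "grp G" and LK: "fst ` G = K" and v: "(mat 1, v) \<in> G"
  shows "(mat 1, r *\<^sub>R prv v) \<in> G"
proof -
  have base: "(mat 1, c *\<^sub>R prv v) \<in> G" if c: "-4 \<le> c" "c \<le> 0" for c
  proof -
    define \<theta> where "\<theta> = arccos (1 + c / 2)"
    have ct: "cos \<theta> = 1 + c / 2" unfolding \<theta>_def using c by (intro cos_arccos) auto
    have a: "(mat 1, expB2 \<theta> *v v) \<in> G" by (rule trans_rot[OF grp LK v])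
    have b: "(mat 1, expB2 (- \<theta>) *v v) \<in> G" by (rule trans_rot[OF grp LK v])
    have m: "(mat 1, - v) \<in> G" by (rule trans_neg[OF grp v])
    have "(mat 1, expB2 \<theta> *v v + expB2 (- \<theta>) *v v + - v + - v) \<in> G"
      using trans_add[OF grp] a b m by blast
    moreover have "expB2 \<theta> *v v + expB2 (- \<theta>) *v v + - v + - v = c *\<^sub>R prv v"
      using ct by (simp add: vec3_eq' mv_nth algebra_simps)
    ultimately show ?thesis by simp
  qed
  define n where "n = nat \<lceil>\<bar>r\<bar>\<rceil> + 1"
  have npos: "real n \<ge> 1" "real n \<ge> \<bar>r\<bar>" unfolding n_def by linarith+
  define \<rho> where "\<rho> = - \<bar>r\<bar> / real n"
  have "-1 \<le> \<rho>" "\<rho> \<le> 0" using npos unfolding \<rho>_def by (auto simp: field_simps)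
  then have "(mat 1, \<rho> *\<^sub>R prv v) \<in> G" using base by auto
  then have "(mat 1, real n *\<^sub>R (\<rho> *\<^sub>R prv v)) \<in> G" by (rule trans_nat[OF grp])
  moreover have "real n *\<^sub>R (\<rho> *\<^sub>R prv v) = (- \<bar>r\<bar>) *\<^sub>R prv v"
    using npos unfolding \<rho>_def by simp
  ultimately have neg: "(mat 1, (- \<bar>r\<bar>) *\<^sub>R prv v) \<in> G" by simp
  show ?thesis
  proof (cases "r \<ge> 0")
    case True
    then show ?thesis using trans_neg[OF grp neg] by simp
  next
    case False then show ?thesis using neg by simp
  qed
qed

lemma div_comb: "((p::real)/n)*a + (q/n)*b = (p*a + q*b)/n" "((p::real)/n)*a - (q/n)*b = (p*a - q*b)/n"
  by (simp_all only: times_divide_eq_left add_divide_distrib diff_divide_distrib)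

lemma solve_aux:
  fixes a b x y n :: real
  assumes n: "n = a\<^sup>2 + b\<^sup>2" "n > 0"
  shows "((x*a + y*b)/n)*a + ((x*b - y*a)/n)*b = x" "((x*a + y*b)/n)*b - ((x*b - y*a)/n)*a = y"
proof -
  have num1: "(x*a + y*b)*a + (x*b - y*a)*b = x*n" using n by (simp add: power2_eq_square algebra_simps)
  have num2: "(x*a + y*b)*b - (x*b - y*a)*a = y*n" using n by (simp add: power2_eq_square algebra_simps)
  have "((x*a + y*b)/n)*a + ((x*b - y*a)/n)*b = ((x*a + y*b)*a + (x*b - y*a)*b)/n"
    by (rule div_comb)
  also have "\<dots> = x" using num1 n(2) by simp
  finally show "((x*a + y*b)/n)*a + ((x*b - y*a)/n)*b = x" .
  have "((x*a + y*b)/n)*b - ((x*b - y*a)/n)*a = ((x*a + y*b)*b - (x*b - y*a)*a)/n"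
    by (rule div_comb)
  also have "\<dots> = y" using num2 n(2) by simp
  finally show "((x*a + y*b)/n)*b - ((x*b - y*a)/n)*a = y" .
qed

lemma trans_plane:
  assumes grp: "grp G" and LK: "fst ` G = K" and v: "(mat 1, v) \<in> G" and nz: "v $ 2 \<noteq> 0 \<or> v $ 3 \<noteq> 0"
    and w: "w $ 1 = 0"
  shows "(mat 1, w) \<in> G"
proof -
  define q where "q = expB2 (pi/2) *v v"
  have q: "(mat 1, q) \<in> G" unfolding q_def by (rule trans_rot[OF grp LK v])
  have q2: "q $ 2 = v $ 3" "q $ 3 = - v $ 2" by (simp_all add: q_def mv_nth)
  define n where "n = (v $ 2)\<^sup>2 + (v $ 3)\<^sup>2"
  have npos: "n > 0" using nz unfolding n_def by (auto simp: add_pos_nonneg add_nonneg_pos)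
  define \<alpha> where "\<alpha> = (w $ 2 * v $ 2 + w $ 3 * v $ 3) / n"
  define \<beta> where "\<beta> = (w $ 2 * v $ 3 - w $ 3 * v $ 2) / n"
  have "(mat 1, \<alpha> *\<^sub>R prv v + \<beta> *\<^sub>R prv q) \<in> G"
    using trans_add[OF grp trans_scal[OF grp LK v] trans_scal[OF grp LK q]] by blast
  moreover have "\<alpha> *\<^sub>R prv v + \<beta> *\<^sub>R prv q = w"
  proof -
    have "\<alpha> * v $ 2 + \<beta> * v $ 3 = w $ 2" "\<alpha> * v $ 3 - \<beta> * v $ 2 = w $ 3"
      using solve_aux[OF n_def npos, of "w $ 2" "w $ 3"] unfolding \<alpha>_def \<beta>_def by simp_all
    then show ?thesis using w q2 by (simp add: vec3_eq')
  qed
  ultimately show ?thesis by simp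
qed



lemma scaleR_mv: "((c::real) *\<^sub>R (A::mat3)) *v x = c *\<^sub>R (A *v x)"
  by (simp add: vec3_eq' mv_nth algebra_simps)

lemma curve_tan:
  assumes "\<forall>t. (expB2 (\<alpha> * t), t *\<^sub>R w) \<in> G"
  shows "\<alpha> *\<^sub>R (B2m *v x) + w \<in> orbit_tangent G x"
proof -
  define c where "c t = (expB2 (\<alpha> * t), t *\<^sub>R w)" for t
  have w: "((\<lambda>t. t *\<^sub>R w) has_vector_derivative w) (at 0)"
    using hvd_scaleR_const[of "\<lambda>t. t" 1 "at 0" w] DERIV_ident by simp
  have d: "(c has_vector_derivative (\<alpha> *\<^sub>R B2m, w)) (at 0)"
    unfolding c_def by (rule has_vector_derivative_Pair[OF expB2_deriv w])
  have c0: "c 0 = aff_one" by (simp add: c_def aff_one_def expB2_0)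
  have cG: "\<forall>t. c t \<in> G" using assms by (simp add: c_def)
  have "\<alpha> *\<^sub>R (B2m *v x) + w = fst (\<alpha> *\<^sub>R B2m, w) *v x + snd (\<alpha> *\<^sub>R B2m, w)"
    by (simp add: scaleR_mv)
  then show ?thesis unfolding orbit_tangent_def using d c0 cG by blast
qed

lemma span_full:
  assumes y: "y $ 1 \<noteq> 0"
  shows "span {e2, e3, y} = UNIV"
proof -
  have "w \<in> span {e2, e3, y}" for w
  proof -
    define a where "a = w $ 1 / y $ 1"
    have "w = a *\<^sub>R y + (w $ 2 - a * y $ 2) *\<^sub>R e2 + (w $ 3 - a * y $ 3) *\<^sub>R e3"
      using y by (simp add: vec3_eq' a_def)
    moreover have "a *\<^sub>R y + (w $ 2 - a * y $ 2) *\<^sub>R e2 + (w $ 3 - a * y $ 3) *\<^sub>R e3 \<in> span {e2, e3, y}"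
      by (intro span_add span_mul span_base) auto
    ultimately show ?thesis by simp
  qed
  then show ?thesis by auto
qed

lemma dim_not2:
  assumes "e2 \<in> S" "e3 \<in> S" "y \<in> S" "y $ 1 \<noteq> 0"
  shows "dim S \<noteq> 2"
proof -
  have "span {e2, e3, y} \<subseteq> span S" using assms by (intro span_mono) auto
  then have "span S = UNIV" using span_full[OF assms(4)] by auto
  then have "dim S = dim (UNIV :: vec3 set)" by (metis dim_span)
  then show ?thesis by simp
qed

lemma cont_expB2:
  fixes f :: "'a::t2_space \<Rightarrow> real"
  assumes that: "continuous_on S f"
  shows "continuous_on S (\<lambda>t. expB2 (f t))"
proof -
  have "continuous_on S (\<lambda>t. D1 + cos (f t) *\<^sub>R D2 + sin (f t) *\<^sub>R B2m)"
    by (intro continuous_intros continuous_on_cos[OF that] continuous_on_sin[OF that])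
  then show ?thesis by (simp add: expB2_decomp)
qed

lemma H_closed:
  assumes "closed G"
  shows "closed {z::complex. (expB2 (Re z), Im z *\<^sub>R e1) \<in> G}"
proof -
  define f where "f z = (expB2 (Re z), Im z *\<^sub>R e1)" for z :: complex
  have "continuous_on UNIV f" unfolding f_def
    by (intro continuous_intros cont_expB2)
  then have "\<And>x. continuous (at x) f" by (metis UNIV_I continuous_on_eq_continuous_at open_UNIV)
  then have "closed (f -` G)" using continuous_closed_vimage assms by blast
  moreover have "f -` G = {z::complex. (expB2 (Re z), Im z *\<^sub>R e1) \<in> G}" by (auto simp: f_def)
  ultimately show ?thesis by simp
qed

lemma expB2_e1' [simp]: "expB2 t *v e1 = e1"
  by (simp add: vec3_eq' mv_nth)

lemma sub_H:
  assumes grp: "grp G" and "(expB2 a, s *\<^sub>R e1) \<in> G" "(expB2 b, t *\<^sub>R e1) \<in> G"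
  shows "(expB2 (a - b), (s - t) *\<^sub>R e1) \<in> G"
proof -
  have "(expB2 (- b), - (t *\<^sub>R e1)) \<in> G" using grp_inv[OF grp assms(3)] by simp
  from grp_mult[OF grp assms(2) this] show ?thesis by (simp add: algebra_simps)
qed

lemma nondisc_line:
  assumes grp: "grp G" and cl: "closed G" and conn: "connected G" and LK: "fst ` G = K"
    and strip: "\<forall>g\<in>G. (fst g, (snd g $ 1) *\<^sub>R e1) \<in> G"
  shows "\<exists>u::complex. u \<noteq> 0 \<and> (\<forall>t. (expB2 (t * Re u), (t * Im u) *\<^sub>R e1) \<in> G)"
proof -
  define H where "H = {z::complex. (expB2 (Re z), Im z *\<^sub>R e1) \<in> G}"
  have nd: "\<forall>\<epsilon>>0. \<exists>\<theta> s. (expB2 \<theta>, s *\<^sub>R e1) \<in> G \<and> \<bar>\<theta>\<bar> < \<epsilon> \<and> \<bar>s\<bar> < \<epsilon> \<and> (\<theta> \<noteq> 0 \<or> s \<noteq> 0)"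
  proof (rule ccontr)
    assume "\<not> ?thesis"
    then obtain \<epsilon> where e: "\<epsilon> > 0"
      "\<forall>\<theta> s. (expB2 \<theta>, s *\<^sub>R e1) \<in> G \<and> \<bar>\<theta>\<bar> < \<epsilon> \<and> \<bar>s\<bar> < \<epsilon> \<longrightarrow> \<theta> = 0 \<and> s = 0"
      by blast
    have all1: "\<forall>g\<in>G. fst g = mat 1" using lemD[OF grp conn _ strip e] LK by blast
    obtain a where "(expB2 pi, a) \<in> G" using LK_surj[OF LK] by blast
    then have "expB2 pi = mat 1" using all1 by force
    then have "(expB2 pi) $ 2 $ 2 = (mat 1 :: mat3) $ 2 $ 2" by simp
    then show False by simp
  qed
  have "\<exists>u. u \<noteq> 0 \<and> (\<forall>t::real. of_real t * u \<in> H)"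
  proof (rule line_lemma)
    show "closed H" unfolding H_def by (rule H_closed[OF cl])
    show "0 \<in> H" unfolding H_def using grp_one[OF grp] by (simp add: expB2_0)
    show "\<forall>a\<in>H. \<forall>b\<in>H. a - b \<in> H" unfolding H_def using sub_H[OF grp] by simp
    show "\<forall>e>0. \<exists>z\<in>H. z \<noteq> 0 \<and> cmod z < e"
    proof (intro allI impI)
      fix e :: real assume "e > 0"
      then obtain \<theta> s where ts: "(expB2 \<theta>, s *\<^sub>R e1) \<in> G" "\<bar>\<theta>\<bar> < e/2" "\<bar>s\<bar> < e/2" "\<theta> \<noteq> 0 \<or> s \<noteq> 0"
        using nd[rule_format, of "e/2"] by auto
      have "Complex \<theta> s \<in> H" using ts(1) unfolding H_def by simp
      moreover have "Complex \<theta> s \<noteq> 0" using ts(4) by (simp add: complex_eq_iff)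
      moreover have "cmod (Complex \<theta> s) < e" using cmod_le[of "Complex \<theta> s"] ts(2,3) by simp
      ultimately show "\<exists>z\<in>H. z \<noteq> 0 \<and> cmod z < e" by blast
    qed
  qed
  then show ?thesis unfolding H_def by (auto simp: mult.commute)
qed



lemma strip_of_plane:
  assumes grp: "grp G" and plane: "\<forall>w. w $ 1 = 0 \<longrightarrow> (mat 1, w) \<in> G"
  shows "\<forall>g\<in>G. (fst g, (snd g $ 1) *\<^sub>R e1) \<in> G"
proof
  fix g assume g: "g \<in> G"
  define u where "u = (snd g $ 1) *\<^sub>R e1 - snd g"
  have "(mat 1, u) \<in> G" using plane by (simp add: u_def)
  then have "(fst g, snd g + u) \<in> G" using trans_left[OF grp, of u "fst g" "snd g"] g by simp
  then show "(fst g, (snd g $ 1) *\<^sub>R e1) \<in> G" by (simp add: u_def)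
qed

lemma all_e1:
  assumes grp: "grp G" and s0: "s0 \<noteq> 0"
    and iv: "\<forall>r. min 0 s0 \<le> r \<and> r \<le> max 0 s0 \<longrightarrow> (mat 1, r *\<^sub>R e1) \<in> G"
  shows "(mat 1, r *\<^sub>R e1) \<in> G"
proof -
  define M where "M = \<bar>s0\<bar>"
  have Mpos: "M > 0" using s0 by (simp add: M_def)
  define n where "n = nat \<lceil>\<bar>r\<bar> / M\<rceil> + 1"
  have n1: "real n \<ge> 1" unfolding n_def by simp
  have nM: "real n * M \<ge> \<bar>r\<bar>"
  proof -
    have "real n \<ge> \<bar>r\<bar> / M" unfolding n_def by linarith
    then show ?thesis using Mpos by (simp add: field_simps)
  qed
  define \<rho> where "\<rho> = \<bar>r\<bar> / real n"
  have rho: "0 \<le> \<rho>" "\<rho> \<le> M" using n1 nM Mpos unfolding \<rho>_def by (auto simp: field_simps)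
  have "(mat 1, \<rho> *\<^sub>R e1) \<in> G"
  proof (cases "s0 > 0")
    case True then show ?thesis using iv rho unfolding M_def by auto
  next
    case False
    have "min 0 s0 \<le> - \<rho> \<and> - \<rho> \<le> max 0 s0" using False rho s0 unfolding M_def by auto
    then have "(mat 1, (- \<rho>) *\<^sub>R e1) \<in> G" using iv by blast
    from trans_neg[OF grp this] show ?thesis by simp
  qed
  from trans_nat[OF grp this, of n] have "(mat 1, \<bar>r\<bar> *\<^sub>R e1) \<in> G"
    using n1 unfolding \<rho>_def by simp
  then show ?thesis
  proof (cases "r \<ge> 0")
    case True then show ?thesis using \<open>(mat 1, \<bar>r\<bar> *\<^sub>R e1) \<in> G\<close> by simp
  next
    case False then show ?thesis using trans_neg[OF grp \<open>(mat 1, \<bar>r\<bar> *\<^sub>R e1) \<in> G\<close>] by simp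
  qed
qed

lemma caseA:
  assumes grp: "grp G" and cl: "closed G" and conn: "connected G" and LK: "fst ` G = K"
    and coh: "cohomogeneity_one G"
    and v: "(mat 1, v) \<in> G" and nz: "v $ 2 \<noteq> 0 \<or> v $ 3 \<noteq> 0"
  shows "G = Iso_R2"
proof -
  have plane: "\<forall>w. w $ 1 = 0 \<longrightarrow> (mat 1, w) \<in> G" using trans_plane[OF grp LK v nz] by blast
  have strip: "\<forall>g\<in>G. (fst g, (snd g $ 1) *\<^sub>R e1) \<in> G" by (rule strip_of_plane[OF grp plane])
  show ?thesis
  proof (cases "\<forall>g\<in>G. snd g $ 1 = 0")
    case True
    show ?thesis
    proof
      show "G \<subseteq> Iso_R2"
      proof
        fix g assume g: "g \<in> G"
        obtain t where t: "fst g = expB2 t" using LK_elt[OF LK g] by blast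
        have "snd g = (snd g $ 2) *\<^sub>R e2 + (snd g $ 3) *\<^sub>R e3" using True g by (simp add: vec3_eq')
        then have "g = (expB2 t, (snd g $ 2) *\<^sub>R e2 + (snd g $ 3) *\<^sub>R e3)" using t by (metis prod.collapse)
        then show "g \<in> Iso_R2" unfolding Iso_R2_def by blast
      qed
      show "Iso_R2 \<subseteq> G"
      proof
        fix g assume "g \<in> Iso_R2"
        then obtain t u w where g: "g = (expB2 t, u *\<^sub>R e2 + w *\<^sub>R e3)" unfolding Iso_R2_def by blast
        obtain a where a: "(expB2 t, a) \<in> G" using LK_surj[OF LK] by blast
        have "a $ 1 = 0" using True a by force
        then have "(expB2 t, 0) \<in> G" using strip a by force
        moreover have "(mat 1, u *\<^sub>R e2 + w *\<^sub>R e3) \<in> G" using plane by simp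
        ultimately have "(expB2 t, 0 + (u *\<^sub>R e2 + w *\<^sub>R e3)) \<in> G" using trans_left[OF grp] by blast
        then show "g \<in> G" using g by simp
      qed
    qed
  next
    case False
    then obtain g0 where g0: "g0 \<in> G" "snd g0 $ 1 \<noteq> 0" by blast
    define s0 where "s0 = snd g0 $ 1"
    obtain u :: complex where u: "u \<noteq> 0" "\<forall>t. (expB2 (t * Re u), (t * Im u) *\<^sub>R e1) \<in> G"
      using nondisc_line[OF grp cl conn LK strip] by blast
    have "\<exists>\<alpha> \<beta>. \<beta> \<noteq> 0 \<and> (\<forall>t. (expB2 (\<alpha> * t), t *\<^sub>R (\<beta> *\<^sub>R e1)) \<in> G)"
    proof (cases "Im u = 0")
      case False
      then show ?thesis using u(2) by (intro exI[of _ "Re u"] exI[of _ "Im u"]) (simp add: mult.commute)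
    next
      case True
      then have Re: "Re u \<noteq> 0" using u(1) by (simp add: complex_eq_iff)
      have K0: "(expB2 \<theta>, 0) \<in> G" for \<theta>
        using u(2)[rule_format, of "\<theta> / Re u"] True Re by simp
      have T1: "(mat 1, (snd g $ 1) *\<^sub>R e1) \<in> G" if g: "g \<in> G" for g
      proof -
        obtain \<theta> where th: "fst g = expB2 \<theta>" using LK_elt[OF LK g] by blast
        have "(expB2 \<theta>, (snd g $ 1) *\<^sub>R e1) \<in> G" using strip g th by force
        from grp_mult[OF grp K0[of "- \<theta>"] this] show ?thesis by (simp add: expB2_0)
      qed
      define S where "S = (\<lambda>g. snd g $ 1) ` G"
      have "connected S" unfolding S_def
        by (intro connected_continuous_image conn continuous_intros)
      then have ci: "\<forall>x\<in>S. \<forall>y\<in>S. \<forall>z. x \<le> z \<longrightarrow> z \<le> y \<longrightarrow> z \<in> S"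
        unfolding connected_iff_interval by blast
      have S0: "0 \<in> S" unfolding S_def using grp_one[OF grp] by force
      have Ss0: "s0 \<in> S" using g0 unfolding s0_def S_def by blast
      have iv: "\<forall>r. min 0 s0 \<le> r \<and> r \<le> max 0 s0 \<longrightarrow> r \<in> (\<lambda>g. snd g $ 1) ` G"
      proof (intro allI impI)
        fix r assume r: "min 0 s0 \<le> r \<and> r \<le> max 0 s0"
        show "r \<in> (\<lambda>g. snd g $ 1) ` G"
        proof (cases "0 \<le> s0")
          case True
          then have "0 \<le> r" "r \<le> s0" using r by auto
          then show ?thesis using ci S0 Ss0 unfolding S_def by blast
        next
          case False
          then have "s0 \<le> r" "r \<le> 0" using r by auto
          then show ?thesis using ci S0 Ss0 unfolding S_def by blast
        qed
      qed
      have "\<forall>r. min 0 s0 \<le> r \<and> r \<le> max 0 s0 \<longrightarrow> (mat 1, r *\<^sub>R e1) \<in> G"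
        using iv T1 by blast
      then have all: "(mat 1, r *\<^sub>R e1) \<in> G" for r using all_e1[OF grp] g0(2) unfolding s0_def by blast
      show ?thesis by (intro exI[of _ 0] exI[of _ 1]) (simp add: expB2_0 all)
    qed
    then obtain \<alpha> \<beta> where ab: "\<beta> \<noteq> 0" "\<forall>t. (expB2 (\<alpha> * t), t *\<^sub>R (\<beta> *\<^sub>R e1)) \<in> G" by blast
    obtain x where x: "dim (orbit_tangent G x) = 2" using coh unfolding cohomogeneity_one_def by blast
    have "e2 \<in> orbit_tangent G x"
      using curve_tan[of 0 e2 G x] plane by (simp add: expB2_0)
    moreover have "e3 \<in> orbit_tangent G x"
      using curve_tan[of 0 e3 G x] plane by (simp add: expB2_0)
    moreover have "\<alpha> *\<^sub>R (B2m *v x) + \<beta> *\<^sub>R e1 \<in> orbit_tangent G x"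
      by (rule curve_tan[OF ab(2)])
    moreover have "(\<alpha> *\<^sub>R (B2m *v x) + \<beta> *\<^sub>R e1) $ 1 \<noteq> 0" using ab(1) by (simp add: mv_nth)
    ultimately have "dim (orbit_tangent G x) \<noteq> 2" by (rule dim_not2)
    then show ?thesis using x by simp
  qed
qed



lemma ent_deriv:
  assumes "(\<gamma> has_vector_derivative v) F"
  shows "((\<lambda>t. fst (\<gamma> t) $ i $ j) has_real_derivative (fst v $ i $ j)) F"
proof -
  have "((\<lambda>t. fst (\<gamma> t)) has_vector_derivative fst v) F"
    by (rule bounded_linear.has_vector_derivative[OF bounded_linear_fst assms])
  then have "((\<lambda>t. fst (\<gamma> t) $ i) has_vector_derivative (fst v $ i)) F"
    by (rule bounded_linear.has_vector_derivative[OF bounded_linear_vec_nth])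
  then have "((\<lambda>t. fst (\<gamma> t) $ i $ j) has_vector_derivative (fst v $ i $ j)) F"
    by (rule bounded_linear.has_vector_derivative[OF bounded_linear_vec_nth])
  then show ?thesis by (simp add: has_real_derivative_iff_has_vector_derivative)
qed

lemma snd_deriv:
  assumes "(\<gamma> has_vector_derivative v) F"
  shows "((\<lambda>t. snd (\<gamma> t) $ i) has_real_derivative (snd v $ i)) F"
proof -
  have "((\<lambda>t. snd (\<gamma> t)) has_vector_derivative snd v) F"
    by (rule bounded_linear.has_vector_derivative[OF bounded_linear_snd assms])
  then have "((\<lambda>t. snd (\<gamma> t) $ i) has_vector_derivative (snd v $ i)) F"
    by (rule bounded_linear.has_vector_derivative[OF bounded_linear_vec_nth])
  then show ?thesis by (simp add: has_real_derivative_iff_has_vector_derivative)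
qed

lemma deriv_const0:
  assumes "(f has_real_derivative D) (at 0)" "\<forall>t. f t = (C::real)"
  shows "D = 0"
proof -
  have "f = (\<lambda>t. C)" using assms(2) by auto
  then have "((\<lambda>t. C) has_real_derivative D) (at 0)" using assms(1) by simp
  then show ?thesis using DERIV_const DERIV_unique by blast
qed

lemma TU:
  assumes grp: "grp G" and LK: "fst ` G = K"
    and zs: "\<forall>g\<in>G. snd g = (snd g $ 1) *\<^sub>R e1"
    and screw: "\<forall>\<theta>. (expB2 \<theta>, (c * \<theta>) *\<^sub>R e1) \<in> G"
    and eps: "\<epsilon> > 0" and disc: "\<forall>s. (mat 1, s *\<^sub>R e1) \<in> G \<and> \<bar>s\<bar> < \<epsilon> \<longrightarrow> s = 0"
    and y: "y \<in> orbit_tangent G x"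
  shows "\<exists>l. y = l *\<^sub>R (B2m *v x + c *\<^sub>R e1)"
proof -
  obtain v \<gamma> where yv: "y = fst v *v x + snd v" and \<gamma>: "\<forall>t. \<gamma> t \<in> G" "\<gamma> 0 = aff_one"
    "(\<gamma> has_vector_derivative v) (at 0)"
    using y unfolding orbit_tangent_def by blast
  define F where "F t = fst (\<gamma> t)" for t
  define a where "a t = snd (\<gamma> t) $ 1" for t
  have FK: "F t \<in> K" for t using \<gamma>(1) LK unfolding F_def by blast
  define th where "th t = (SOME \<theta>. - pi \<le> \<theta> \<and> \<theta> \<le> pi \<and> F t = expB2 \<theta>)" for t
  have th: "- pi \<le> th t" "th t \<le> pi" "F t = expB2 (th t)" for t
  proof -
    have "\<exists>\<theta>. - pi \<le> \<theta> \<and> \<theta> \<le> pi \<and> F t = expB2 \<theta>" using K_rep[OF FK] .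
    then have "- pi \<le> th t \<and> th t \<le> pi \<and> F t = expB2 (th t)" unfolding th_def by (rule someI_ex)
    then show "- pi \<le> th t" "th t \<le> pi" "F t = expB2 (th t)" by auto
  qed
  have sndg: "snd (\<gamma> t) = a t *\<^sub>R e1" for t using zs \<gamma>(1) unfolding a_def by blast
  define l where "l = fst v $ 2 $ 3"
  define \<sigma> where "\<sigma> = snd v $ 1"
  have dF: "((\<lambda>t. F t $ i $ j) has_real_derivative (fst v $ i $ j)) (at 0)" for i j
    unfolding F_def by (rule ent_deriv[OF \<gamma>(3)])
  have da: "((\<lambda>t. snd (\<gamma> t) $ i) has_real_derivative (snd v $ i)) (at 0)" for i
    by (rule snd_deriv[OF \<gamma>(3)])
  have f11: "fst v $ 1 $ 1 = 0" by (rule deriv_const0[OF dF]) (simp add: th)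
  have f12: "fst v $ 1 $ 2 = 0" by (rule deriv_const0[OF dF]) (simp add: th)
  have f13: "fst v $ 1 $ 3 = 0" by (rule deriv_const0[OF dF]) (simp add: th)
  have f21: "fst v $ 2 $ 1 = 0" by (rule deriv_const0[OF dF]) (simp add: th)
  have f31: "fst v $ 3 $ 1 = 0" by (rule deriv_const0[OF dF]) (simp add: th)
  have F0: "F 0 = mat 1" using \<gamma>(2) unfolding F_def aff_one_def by simp
  have f22: "fst v $ 2 $ 2 = 0"
  proof (rule DERIV_local_max[OF dF[of 2 2], of 1])
    show "\<forall>y. \<bar>0 - y\<bar> < 1 \<longrightarrow> F y $ 2 $ 2 \<le> F 0 $ 2 $ 2" using th F0 by simp
  qed simp
  have f33: "fst v $ 3 $ 3 = 0"
  proof (rule DERIV_local_max[OF dF[of 3 3], of 1])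
    show "\<forall>y. \<bar>0 - y\<bar> < 1 \<longrightarrow> F y $ 3 $ 3 \<le> F 0 $ 3 $ 3" using th F0 by simp
  qed simp
  have f32: "fst v $ 3 $ 2 = - l"
  proof -
    have "((\<lambda>t. - (F t $ 2 $ 3)) has_real_derivative - l) (at 0)"
      unfolding l_def by (intro derivative_intros dF)
    moreover have "(\<lambda>t. - (F t $ 2 $ 3)) = (\<lambda>t. F t $ 3 $ 2)" using th by (simp add: fun_eq_iff)
    ultimately have "((\<lambda>t. F t $ 3 $ 2) has_real_derivative - l) (at 0)" by simp
    then show ?thesis using dF[of 3 2] DERIV_unique by blast
  qed
  have fv: "fst v = l *\<^sub>R B2m"
    by (simp add: mat3_eq' f11 f12 f13 f21 f22 f31 f32 f33 l_def)
  have s2: "snd v $ 2 = 0" by (rule deriv_const0[OF da]) (simp add: sndg)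
  have s3: "snd v $ 3 = 0" by (rule deriv_const0[OF da]) (simp add: sndg)
  have sv: "snd v = \<sigma> *\<^sub>R e1" by (simp add: vec3_eq' s2 s3 \<sigma>_def)
  have dA: "(a has_real_derivative \<sigma>) (at 0)" unfolding a_def \<sigma>_def by (rule da)
  have a0: "a 0 = 0" using \<gamma>(2) unfolding a_def aff_one_def by simp
  define \<eta> where "\<eta> = min (pi/2) (\<epsilon> / (2 * (\<bar>c\<bar> + 1)))"
  have eta: "0 < \<eta>" "\<eta> \<le> pi" "\<bar>c\<bar> * \<eta> \<le> \<epsilon> / 2"
  proof -
    show "0 < \<eta>" using eps unfolding \<eta>_def by (simp add: pi_gt_zero)
    show "\<eta> \<le> pi" unfolding \<eta>_def using pi_gt_zero by linarith
    have "\<eta> \<le> \<epsilon> / (2 * (\<bar>c\<bar> + 1))" unfolding \<eta>_def by simp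
    then have "\<bar>c\<bar> * \<eta> \<le> \<bar>c\<bar> * (\<epsilon> / (2 * (\<bar>c\<bar> + 1)))" by (rule mult_left_mono) simp
    also have "\<dots> \<le> \<epsilon> / 2" using eps by (simp add: field_simps)
    finally show "\<bar>c\<bar> * \<eta> \<le> \<epsilon> / 2" .
  qed
  define \<delta> where "\<delta> = min (\<epsilon>/2) (1 - cos \<eta>)"
  have dpos: "\<delta> > 0" using eps cos_lt1[OF eta(1,2)] unfolding \<delta>_def by simp
  have "continuous (at 0) \<gamma>" by (rule has_vector_derivative_continuous[OF \<gamma>(3)])
  then obtain d where d: "d > 0" "\<forall>t. dist t 0 < d \<longrightarrow> dist (\<gamma> t) (\<gamma> 0) < \<delta>"
    unfolding continuous_at_eps_delta using dpos by blast
  have near: "a t = c * th t \<and> F t $ 2 $ 3 = sin (th t)" if t: "dist t 0 < d" for t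
  proof -
    have dt: "dist (\<gamma> t) aff_one < \<delta>" using d t \<gamma>(2) by simp
    have "dist (F t) (mat 1) < \<delta>" using dist_fst_le[of "\<gamma> t" aff_one] dt
      unfolding F_def aff_one_def by simp
    then have "\<bar>(F t - mat 1) $ 2 $ 2\<bar> < \<delta>" using entry_le_norm[of "F t - mat 1" 2 2]
      by (simp add: dist_norm)
    then have "\<bar>cos (th t) - 1\<bar> < \<delta>" using th by simp
    then have "cos (th t) > cos \<eta>" unfolding \<delta>_def by linarith
    moreover have "\<bar>th t\<bar> \<le> pi" using th(1)[of t] th(2)[of t] by linarith
    ultimately have tsm: "\<bar>th t\<bar> < \<eta>" using small_angle[of "th t" \<eta>] eta(1,2) by linarith
    have "dist (snd (\<gamma> t)) 0 < \<delta>" using dist_snd_le[of "\<gamma> t" aff_one] dt unfolding aff_one_def by simp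
    then have "\<bar>snd (\<gamma> t) $ 1\<bar> < \<delta>" using component_le_norm_cart[of "snd (\<gamma> t)" 1] by simp
    then have asm: "\<bar>a t\<bar> < \<epsilon>/2" unfolding a_def \<delta>_def by simp
    have g1: "(expB2 (th t), a t *\<^sub>R e1) \<in> G"
      using spec[OF \<gamma>(1), of t] sndg[of t] th(3)[of t] unfolding F_def by (metis prod.collapse)
    have "(expB2 (th t - th t), (a t - c * th t) *\<^sub>R e1) \<in> G"
      by (rule sub_H[OF grp g1 screw[rule_format]])
    then have "(mat 1, (a t - c * th t) *\<^sub>R e1) \<in> G" by (simp add: expB2_0)
    moreover have "\<bar>a t - c * th t\<bar> < \<epsilon>"
    proof -
      have "\<bar>c * th t\<bar> \<le> \<bar>c\<bar> * \<eta>" using tsm by (simp add: abs_mult mult_left_mono)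
      then show ?thesis using asm eta(3) by linarith
    qed
    ultimately have "a t - c * th t = 0" using disc by blast
    then show ?thesis using th by simp
  qed
  have ev: "eventually (\<lambda>t. a t = c * th t \<and> F t $ 2 $ 3 = sin (th t)) (nhds 0)"
    unfolding eventually_nhds_metric using d near by blast
  have "\<sigma> = c * l"
  proof (cases "c = 0")
    case True
    have "eventually (\<lambda>t. a t = 0) (nhds 0)" using ev True by (auto elim: eventually_mono)
    then have "((\<lambda>t. 0) has_real_derivative \<sigma>) (at 0)"
      using DERIV_cong_ev[of 0 0 a "\<lambda>t. 0" \<sigma> \<sigma>] dA by simp
    then have "\<sigma> = 0" using DERIV_const DERIV_unique by blast
    then show ?thesis using True by simp
  next
    case False
    have "eventually (\<lambda>t. F t $ 2 $ 3 = sin (a t / c)) (nhds 0)"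
      using ev False by (auto elim: eventually_mono)
    moreover have "((\<lambda>t. sin (a t / c)) has_real_derivative (cos (a 0 / c) * (\<sigma> / c))) (at 0)"
      by (intro derivative_eq_intros dA) (auto simp: False dA)
    ultimately have "((\<lambda>t. F t $ 2 $ 3) has_real_derivative (\<sigma> / c)) (at 0)"
      using DERIV_cong_ev[of 0 0 "\<lambda>t. F t $ 2 $ 3" "\<lambda>t. sin (a t / c)" "\<sigma> / c" "\<sigma> / c"] a0 by simp
    then have "l = \<sigma> / c" using dF[of 2 3] DERIV_unique unfolding l_def by blast
    then show ?thesis using False by simp
  qed
  then have "y = l *\<^sub>R (B2m *v x + c *\<^sub>R e1)"
    using yv fv sv by (simp add: scaleR_mv algebra_simps)
  then show ?thesis by blast
qed



lemma caseB1:
  assumes grp: "grp G" and cl: "closed G" and conn: "connected G" and LK: "fst ` G = K"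
    and coh: "cohomogeneity_one G"
    and zs: "\<forall>g\<in>G. snd g = (snd g $ 1) *\<^sub>R e1"
  shows "G = SO2_times_R"
proof -
  have strip: "\<forall>g\<in>G. (fst g, (snd g $ 1) *\<^sub>R e1) \<in> G" using zs by (metis prod.collapse)
  show ?thesis
  proof (cases "\<forall>s. (mat 1, s *\<^sub>R e1) \<in> G")
    case True
    show ?thesis
    proof
      show "G \<subseteq> SO2_times_R"
      proof
        fix g assume g: "g \<in> G"
        obtain t where t: "fst g = expB2 t" using LK_elt[OF LK g] by blast
        have "g = (expB2 t, (snd g $ 1) *\<^sub>R e1)" using t zs g by (metis prod.collapse)
        then show "g \<in> SO2_times_R" unfolding SO2_times_R_def by blast
      qed
      show "SO2_times_R \<subseteq> G"
      proof
        fix g assume "g \<in> SO2_times_R"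
        then obtain t s where g: "g = (expB2 t, s *\<^sub>R e1)" unfolding SO2_times_R_def by blast
        obtain a where a: "(expB2 t, a) \<in> G" using LK_surj[OF LK] by blast
        have aa: "a = (a $ 1) *\<^sub>R e1" using zs a by force
        have "(expB2 t, a + (s - a $ 1) *\<^sub>R e1) \<in> G" using trans_left[OF grp True[rule_format] a] .
        moreover have "a + (s - a $ 1) *\<^sub>R e1 = s *\<^sub>R e1" by (subst aa) (simp add: algebra_simps)
        ultimately show "g \<in> G" using g by simp
      qed
    qed
  next
    case False
    then obtain s1 where s1: "(mat 1, s1 *\<^sub>R e1) \<notin> G" by blast
    obtain u :: complex where u: "u \<noteq> 0" "\<forall>t. (expB2 (t * Re u), (t * Im u) *\<^sub>R e1) \<in> G"
      using nondisc_line[OF grp cl conn LK strip] by blast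
    have Re: "Re u \<noteq> 0"
    proof
      assume R0: "Re u = 0"
      then have "Im u \<noteq> 0" using u(1) by (simp add: complex_eq_iff)
      then show False using u(2)[rule_format, of "s1 / Im u"] R0 s1 by (simp add: expB2_0)
    qed
    define c where "c = Im u / Re u"
    have screw: "\<forall>\<theta>. (expB2 \<theta>, (c * \<theta>) *\<^sub>R e1) \<in> G"
    proof
      fix \<theta>
      have "(expB2 (\<theta> / Re u * Re u), (\<theta> / Re u * Im u) *\<^sub>R e1) \<in> G" using u(2) by blast
      then show "(expB2 \<theta>, (c * \<theta>) *\<^sub>R e1) \<in> G" using Re by (simp add: c_def mult.commute)
    qed
    have "\<exists>\<epsilon>>0. \<forall>s. (mat 1, s *\<^sub>R e1) \<in> G \<and> \<bar>s\<bar> < \<epsilon> \<longrightarrow> s = 0"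
    proof (rule ccontr)
      assume nd: "\<not> ?thesis"
      define Hd where "Hd = {z::complex. (expB2 (Re z), Im z *\<^sub>R e1) \<in> G} \<inter> {z. Re z = 0}"
      have "\<exists>u. u \<noteq> 0 \<and> (\<forall>t::real. of_real t * u \<in> Hd)"
      proof (rule line_lemma)
        have "closed {z::complex. Re z = 0}" by (intro closed_Collect_eq continuous_intros)
        then show "closed Hd" unfolding Hd_def using H_closed[OF cl] by blast
        show "0 \<in> Hd" unfolding Hd_def using grp_one[OF grp] by (simp add: expB2_0)
        show "\<forall>a\<in>Hd. \<forall>b\<in>Hd. a - b \<in> Hd"
        proof (intro ballI)
          fix a b assume ab: "a \<in> Hd" "b \<in> Hd"
          then have "(expB2 (Re a - Re b), (Im a - Im b) *\<^sub>R e1) \<in> G"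
            using sub_H[OF grp] unfolding Hd_def by blast
          then show "a - b \<in> Hd" using ab unfolding Hd_def by simp
        qed
        show "\<forall>e>0. \<exists>z\<in>Hd. z \<noteq> 0 \<and> cmod z < e"
        proof (intro allI impI)
          fix e :: real assume "e > 0"
          then obtain s where s: "(mat 1, s *\<^sub>R e1) \<in> G" "\<bar>s\<bar> < e" "s \<noteq> 0" using nd by blast
          have "Complex 0 s \<in> Hd" using s(1) unfolding Hd_def by (simp add: expB2_0)
          moreover have "Complex 0 s \<noteq> 0" using s(3) by (simp add: complex_eq_iff)
          moreover have "cmod (Complex 0 s) < e" using s(2) by (simp add: cmod_def)
          ultimately show "\<exists>z\<in>Hd. z \<noteq> 0 \<and> cmod z < e" by blast
        qed
      qed
      then obtain u' where u': "u' \<noteq> 0" "\<forall>t::real. of_real t * u' \<in> Hd" by blast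
      have "Re u' = 0" using u'(2)[rule_format, of 1] unfolding Hd_def by simp
      then have "Im u' \<noteq> 0" using u'(1) by (simp add: complex_eq_iff)
      then have "(expB2 0, s1 *\<^sub>R e1) \<in> G" using u'(2)[rule_format, of "s1 / Im u'"] \<open>Re u' = 0\<close>
        unfolding Hd_def by simp
      then show False using s1 by (simp add: expB2_0)
    qed
    then obtain \<epsilon> where eps: "\<epsilon> > 0" and disc: "\<forall>s. (mat 1, s *\<^sub>R e1) \<in> G \<and> \<bar>s\<bar> < \<epsilon> \<longrightarrow> s = 0"
      by blast
    obtain x where x: "dim (orbit_tangent G x) = 2" using coh unfolding cohomogeneity_one_def by blast
    have "orbit_tangent G x \<subseteq> span {B2m *v x + c *\<^sub>R e1}"
    proof
      fix y assume "y \<in> orbit_tangent G x"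
      then obtain l where "y = l *\<^sub>R (B2m *v x + c *\<^sub>R e1)"
        using TU[OF grp LK zs screw eps disc] by blast
      then show "y \<in> span {B2m *v x + c *\<^sub>R e1}" by (simp add: span_base span_scale)
    qed
    then have "dim (orbit_tangent G x) \<le> card {B2m *v x + c *\<^sub>R e1}" by (rule dim_le_card) simp
    then show ?thesis using x by simp
  qed
qed

lemma fiber_eq:
  assumes grp: "grp G" and tB: "\<forall>v. (mat 1, v) \<in> G \<longrightarrow> v $ 2 = 0 \<and> v $ 3 = 0"
    and a: "(expB2 \<theta>, a) \<in> G" and b: "(expB2 \<theta>, b) \<in> G"
  shows "a $ 2 = b $ 2 \<and> a $ 3 = b $ 3"
proof -
  have "(expB2 (- \<theta> + \<theta>), expB2 (- \<theta>) *v b + - (expB2 (- \<theta>) *v a)) \<in> G"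
    by (rule grp_mult[OF grp grp_inv[OF grp a] b])
  then have "(mat 1, expB2 (- \<theta>) *v (b - a)) \<in> G"
    by (simp add: expB2_0 matrix_vector_mult_diff_distrib)
  then have e: "(expB2 (- \<theta>) *v (b - a)) $ 2 = 0" "(expB2 (- \<theta>) *v (b - a)) $ 3 = 0" using tB by auto
  define e where "e = expB2 (- \<theta>) *v (b - a)"
  have be: "b - a = expB2 \<theta> *v e" unfolding e_def by (simp add: expB2_cancel)
  have e2: "e $ 2 = 0" "e $ 3 = 0" using e unfolding e_def by auto
  have "(expB2 \<theta> *v e) $ 2 = 0" "(expB2 \<theta> *v e) $ 3 = 0" by (simp_all add: mv_nth e2)
  then have "(b - a) $ 2 = 0" "(b - a) $ 3 = 0" using be by simp_all
  then show ?thesis by simp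
qed

lemma cocycle:
  assumes grp: "grp G" and LK: "fst ` G = K"
    and tB: "\<forall>v. (mat 1, v) \<in> G \<longrightarrow> v $ 2 = 0 \<and> v $ 3 = 0"
  shows "\<exists>w0. w0 $ 1 = 0 \<and> (\<forall>\<theta> a. (expB2 \<theta>, a) \<in> G \<longrightarrow>
            a $ 2 = w0 $ 2 - (expB2 \<theta> *v w0) $ 2 \<and> a $ 3 = w0 $ 3 - (expB2 \<theta> *v w0) $ 3)"
proof -
  obtain a0 where a0: "(expB2 pi, a0) \<in> G" using LK_surj[OF LK] by blast
  define w0 where "w0 = (1/2) *\<^sub>R prv a0"
  have "a $ 2 = w0 $ 2 - (expB2 \<theta> *v w0) $ 2 \<and> a $ 3 = w0 $ 3 - (expB2 \<theta> *v w0) $ 3"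
    if a: "(expB2 \<theta>, a) \<in> G" for \<theta> a
  proof -
    have 1: "(expB2 (\<theta> + pi), expB2 \<theta> *v a0 + a) \<in> G" by (rule grp_mult[OF grp a a0])
    have 2: "(expB2 (pi + \<theta>), expB2 pi *v a + a0) \<in> G" by (rule grp_mult[OF grp a0 a])
    have "(expB2 \<theta> *v a0 + a) $ 2 = (expB2 pi *v a + a0) $ 2 \<and> (expB2 \<theta> *v a0 + a) $ 3 = (expB2 pi *v a + a0) $ 3"
      using fiber_eq[OF grp tB 1] 2 by (simp add: add.commute)
    then show ?thesis by (simp add: mv_nth w0_def algebra_simps)
  qed
  moreover have "w0 $ 1 = 0" by (simp add: w0_def)
  ultimately show ?thesis by blast
qed



lemma inv_fst_K: "fst ` G = K \<Longrightarrow> \<forall>h\<in>G. invertible (fst h)"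
  using LK_elt invertible_expB2 by metis

lemma fst_cj_id: "fst (cj (mat 1, b) h) = fst h"
  by (cases h) (simp add: cj_formula inv_mat1)

lemma caseB:
  assumes grp: "grp G" and cl: "closed G" and conn: "connected G" and LK: "fst ` G = K"
    and coh: "cohomogeneity_one G"
    and tB: "\<forall>v. (mat 1, v) \<in> G \<longrightarrow> v $ 2 = 0 \<and> v $ 3 = 0"
  shows "\<exists>w0. G = cj (mat 1, w0) ` SO2_times_R"
proof -
  obtain w0 where w0: "w0 $ 1 = 0" "\<forall>\<theta> a. (expB2 \<theta>, a) \<in> G \<longrightarrow>
            a $ 2 = w0 $ 2 - (expB2 \<theta> *v w0) $ 2 \<and> a $ 3 = w0 $ 3 - (expB2 \<theta> *v w0) $ 3"
    using cocycle[OF grp LK tB] by blast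
  define g where "g = (mat 1 :: mat3, - w0)"
  have ig: "invertible (fst g)" by (simp add: g_def invertible_mat1)
  define G1 where "G1 = cj g ` G"
  have grp1: "grp G1" unfolding G1_def by (rule grp_conj[OF grp inv_fst_K[OF LK] ig])
  have cl1: "closed G1" unfolding G1_def by (rule closed_cj[OF ig cl])
  have conn1: "connected G1" unfolding G1_def by (rule connected_cj[OF conn])
  have LK1: "fst ` G1 = K" unfolding G1_def g_def using LK by (simp add: image_image fst_cj_id)
  have coh1: "cohomogeneity_one G1" unfolding G1_def g_def by (rule coh_cj[OF invertible_mat1 coh])
  have zs1: "\<forall>h\<in>G1. snd h = (snd h $ 1) *\<^sub>R e1"
  proof
    fix h assume "h \<in> G1"
    then obtain k where k: "k \<in> G" "h = cj g k" unfolding G1_def by blast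
    obtain \<theta> where th: "fst k = expB2 \<theta>" using LK_elt[OF LK k(1)] by blast
    have kk: "(expB2 \<theta>, snd k) \<in> G" using k(1) th by (metis prod.collapse)
    have h: "h = (expB2 \<theta>, snd k - w0 + expB2 \<theta> *v w0)"
      using k(2) th unfolding g_def by (cases k) (simp add: cj_formula inv_mat1 algebra_simps)
    show "snd h = (snd h $ 1) *\<^sub>R e1"
      using w0(2)[rule_format, OF kk] w0(1) unfolding h by (simp add: vec3_eq')
  qed
  have "G1 = SO2_times_R" by (rule caseB1[OF grp1 cl1 conn1 LK1 coh1 zs1])
  moreover have "G = cj (aff_inv g) ` G1" unfolding G1_def using cj_image_inv[OF ig] by simp
  moreover have "aff_inv g = (mat 1, w0)" unfolding g_def by (simp add: aff_inv_def inv_mat1)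
  ultimately show ?thesis by auto
qed

lemma main_lemma:
  assumes grp: "grp G" and cl: "closed G" and conn: "connected G" and LK: "fst ` G = K"
    and coh: "cohomogeneity_one G"
  shows "G = Iso_R2 \<or> (\<exists>w0. G = cj (mat 1, w0) ` SO2_times_R)"
proof (cases "\<exists>v. (mat 1, v) \<in> G \<and> (v $ 2 \<noteq> 0 \<or> v $ 3 \<noteq> 0)")
  case True
  then obtain v where "(mat 1, v) \<in> G" "v $ 2 \<noteq> 0 \<or> v $ 3 \<noteq> 0" by blast
  then show ?thesis using caseA[OF grp cl conn LK coh] by blast
next
  case False
  then show ?thesis using caseB[OF grp cl conn LK coh] by blast
qed

theorem lemma3p1:
  fixes G :: "((real^3^3) \<times> (real^3)) set"
  assumes "is_subgroup G" and "closed G" and "connected G"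
    and "cohomogeneity_one G"
    and "\<exists>P\<in>SOo12. Lpart G = (\<lambda>k. P ** k ** matrix_inv P) ` K"
  shows "\<exists>g\<in>SOo12_semidirect. G = conj_aff g SO2_times_R \<or> G = conj_aff g Iso_R2"
proof -
  obtain P where P: "P \<in> SOo12" "fst ` G = (\<lambda>k. P ** k ** matrix_inv P) ` K"
    using assms(5) unfolding Lpart_def by blast
  have iP: "invertible P" using P(1) unfolding SOo12_def by (simp add: invertible_det_nz)
  define Pi where "Pi = matrix_inv P"
  have iPi: "invertible Pi" unfolding Pi_def by (rule invertible_inv[OF iP])
  have PiP: "Pi ** P = mat 1" "P ** Pi = mat 1" unfolding Pi_def using inv_props[OF iP] by auto
  have grp: "grp G" using assms(1) unfolding is_subgroup_def grp_def by blast
  have invG: "\<forall>h\<in>G. invertible (fst h)"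
  proof
    fix h assume "h \<in> G"
    then obtain k where "k \<in> K" "fst h = P ** k ** Pi" using P(2) unfolding Pi_def by force
    then show "invertible (fst h)"
      using invertible_mult[OF invertible_mult[OF iP] iPi] unfolding K_def
      by (auto simp: invertible_expB2)
  qed
  define g where "g = (Pi, 0 :: vec3)"
  have ig: "invertible (fst g)" by (simp add: g_def iPi)
  define G0 where "G0 = cj g ` G"
  have fcj: "fst (cj g h) = Pi ** fst h ** P" for h
    by (cases h) (simp add: g_def cj_formula Pi_def inv_inv[OF iP])
  have LK0: "fst ` G0 = K"
  proof -
    have "fst ` G0 = (\<lambda>h. Pi ** fst h ** P) ` G" unfolding G0_def by (simp add: image_image fcj)
    also have "\<dots> = (\<lambda>A. Pi ** A ** P) ` fst ` G" by (simp add: image_image)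
    also have "\<dots> = (\<lambda>k. Pi ** (P ** k ** Pi) ** P) ` K" unfolding P(2) Pi_def by (simp add: image_image)
    also have "\<dots> = K"
    proof -
      have "Pi ** (P ** k ** Pi) ** P = k" for k
      proof -
        have "Pi ** (P ** k ** Pi) ** P = (Pi ** P) ** k ** (Pi ** P)" by (simp add: matrix_mul_assoc)
        then show ?thesis using PiP by simp
      qed
      then show ?thesis by simp
    qed
    finally show ?thesis .
  qed
  have grp0: "grp G0" unfolding G0_def by (rule grp_conj[OF grp invG ig])
  have cl0: "closed G0" unfolding G0_def by (rule closed_cj[OF ig assms(2)])
  have conn0: "connected G0" unfolding G0_def by (rule connected_cj[OF assms(3)])
  have coh0: "cohomogeneity_one G0" unfolding G0_def g_def by (rule coh_cj[OF iPi assms(4)])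
  have GG0: "G = cj (P, 0) ` G0"
  proof -
    have "aff_inv g = (P, 0)" unfolding g_def by (simp add: aff_inv_def Pi_def inv_inv[OF iP])
    then show ?thesis unfolding G0_def using cj_image_inv[OF ig, of G] by simp
  qed
  have PS: "(P, 0) \<in> SOo12_semidirect" using P(1) unfolding SOo12_semidirect_def by simp
  from main_lemma[OF grp0 cl0 conn0 LK0 coh0] show ?thesis
  proof
    assume "G0 = Iso_R2"
    then have "G = conj_aff (P, 0) Iso_R2" using GG0 by (simp add: conj_aff_cj)
    then show ?thesis using PS by blast
  next
    assume "\<exists>w0. G0 = cj (mat 1, w0) ` SO2_times_R"
    then obtain w0 where w0: "G0 = cj (mat 1, w0) ` SO2_times_R" by blast
    have "G = (\<lambda>h. cj (P, 0) (cj (mat 1, w0) h)) ` SO2_times_R" using GG0 w0 by (simp add: image_image)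
    also have "\<dots> = cj (aff_mult (P, 0) (mat 1, w0)) ` SO2_times_R"
      using cj_cj[of "(P, 0)" "(mat 1, w0)"] iP invertible_mat1 by simp
    also have "aff_mult (P, 0) (mat 1, w0) = (P, P *v w0)" by (simp add: aff_mult_def)
    finally have "G = conj_aff (P, P *v w0) SO2_times_R" by (simp add: conj_aff_cj)
    moreover have "(P, P *v w0) \<in> SOo12_semidirect" using P(1) unfolding SOo12_semidirect_def by simp
    ultimately show ?thesis by blast
  qed
qed

end
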